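(* The set of functions $\{\sigma_\omega\}_{\omega\in S}$ is linearly independent as a set of real-valued functions on the set of all Seifert matrices. That is, if $\omega_1,\dots,\omega_N\in S$ are distinct and $c_1,\dots,c_N\in\mathbb{R}$ satisfy $\sum_{i=1}^N c_i\,\sigma_{\omega_i}(V)=0$ for every Seifert matrix $V$, then $c_1=\dots=c_N=0$.
   Context: A Seifert matrix is a square integral matrix $V$ with $\det(V-V^T)=\pm1$ (such a matrix necessarily has even size). For a unit complex number $\omega$, the hermitianized Seifert form is $V_\omega=(1-\omega)V+(1-\bar\omega)V^T$ (a Hermitian matrix), and $\sigma_\omega(V)$ denotes its signature. $S$ denotes the set of unit complex numbers with positive imaginary part. *)

theory Defs
  imports Complex_Main "Jordan_Normal_Form.Char_Poly"
begin

definition seifert_matrix :: "int mat \<Rightarrow> bool" where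
  "seifert_matrix V \<longleftrightarrow> dim_row V = dim_col V \<and>
     (det (V - transpose_mat V) = 1 \<or> det (V - transpose_mat V) = -1)"

definition herm_seifert :: "complex \<Rightarrow> int mat \<Rightarrow> complex mat" where
  "herm_seifert w V = (1 - w) \<cdot>\<^sub>m map_mat of_int V
      + (1 - cnj w) \<cdot>\<^sub>m map_mat of_int (transpose_mat V)"

definition signature :: "complex mat \<Rightarrow> int" where
  "signature A =
     int (\<Sum>x\<in>{x. poly (char_poly A) x = 0 \<and> x \<in> \<real> \<and> Re x > 0}. order x (char_poly A))
   - int (\<Sum>x\<in>{x. poly (char_poly A) x = 0 \<and> x \<in> \<real> \<and> Re x < 0}. order x (char_poly A))"

definition sigma_w :: "complex \<Rightarrow> int mat \<Rightarrow> int" where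
  "sigma_w w V = signature (herm_seifert w V)"

definition S_set :: "complex set" where
  "S_set = {w. norm w = 1 \<and> Im w > 0}"

end

theory Submission
  imports Defs "Jordan_Normal_Form.Schur_Decomposition"
begin


lemma order_linear_factor:
  "Polynomial.order x [:-e, 1::complex:] = (if x = e then 1 else 0)"
proof (cases "x = e")
  case True then show ?thesis using order_power_n_n[of e 1] by simp
next
  case False then have "Polynomial.order x [:-e, 1::complex:] = 0" by (intro order_0I) auto
  then show ?thesis using False by simp
qed

lemma sum_order_prod:
  fixes es :: "complex list"
  shows "(\<Sum>x\<in>{x. poly (\<Prod>a\<leftarrow>es. [:-a,1:]) x = 0 \<and> P x}. Polynomial.order x (\<Prod>a\<leftarrow>es. [:-a,1:]))
     = length (filter P es)"
proof (induction es)
  case Nil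
  then show ?case by simp
next
  case (Cons e es)
  let ?q = "\<Prod>a\<leftarrow>es. [:-a,1:]"
  let ?p = "[:-e,1:] * ?q"
  have q0: "?q \<noteq> 0" unfolding prod_list_zero_iff by auto
  have pq: "?p \<noteq> 0" using q0 by (metis mult_eq_0_iff pCons_eq_0_iff zero_neq_one)
  have R: "{x. poly ?p x = 0 \<and> P x} = {x. (x = e \<or> poly ?q x = 0) \<and> P x}" by auto
  have finq: "finite {x. poly ?q x = 0}" using q0 poly_roots_finite by blast
  have fin: "finite {x. (x = e \<or> poly ?q x = 0) \<and> P x}"
    by (rule finite_subset[of _ "insert e {x. poly ?q x = 0}"]) (use finq in auto)
  have ord: "Polynomial.order x ?p = (if x = e then 1 else 0) + Polynomial.order x ?q" for x
    by (subst order_mult[OF pq]) (simp only: order_linear_factor)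
  have "(\<Sum>x\<in>{x. poly ?p x = 0 \<and> P x}. Polynomial.order x ?p)
     = (\<Sum>x\<in>{x. (x = e \<or> poly ?q x = 0) \<and> P x}. (if x = e then 1 else 0))
       + (\<Sum>x\<in>{x. (x = e \<or> poly ?q x = 0) \<and> P x}. Polynomial.order x ?q)"
    unfolding R ord by (simp add: sum.distrib)
  also have "(\<Sum>x\<in>{x. (x = e \<or> poly ?q x = 0) \<and> P x}. (if x = e then 1 else 0::nat))
     = (if P e then 1 else 0)"
    using fin by (simp add: sum.If_cases)
  also have "(\<Sum>x\<in>{x. (x = e \<or> poly ?q x = 0) \<and> P x}. Polynomial.order x ?q)
     = (\<Sum>x\<in>{x. poly ?q x = 0 \<and> P x}. Polynomial.order x ?q)"
    by (rule sum.mono_neutral_right[OF fin]) (auto simp: order_root)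
  finally show ?case using Cons.IH by simp
qed





lemma signature_list:
  assumes "char_poly H = (\<Prod>a\<leftarrow>es. [:-a,1:])"
  shows "signature H = int (length (filter (\<lambda>x. x \<in> \<real> \<and> Re x > 0) es))
                     - int (length (filter (\<lambda>x. x \<in> \<real> \<and> Re x < 0) es))"
  unfolding signature_def assms
  using sum_order_prod[of es "\<lambda>x. x \<in> \<real> \<and> Re x > 0"] sum_order_prod[of es "\<lambda>x. x \<in> \<real> \<and> Re x < 0"]
  by simp



definition herm :: "complex mat \<Rightarrow> bool" where
  "herm H \<longleftrightarrow> (\<forall>i<dim_row H. \<forall>j<dim_row H. H $$ (i,j) = cnj (H $$ (j,i)))"

lemma herm_eig_real:
  assumes H: "H \<in> carrier_mat n n" and h: "herm H" and r: "poly (char_poly H) e = 0"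
  shows "e \<in> \<real>"
proof -
  from r have "eigenvalue H e" using eigenvalue_root_char_poly[OF H] by simp
  then obtain v where v: "v \<in> carrier_vec n" "v \<noteq> 0\<^sub>v n" "H *\<^sub>v v = e \<cdot>\<^sub>v v"
    unfolding eigenvalue_def eigenvector_def using H by auto
  define q where "q = (\<Sum>i<n. \<Sum>j<n. cnj (v$i) * H $$ (i,j) * v$j)"
  define r where "r = (\<Sum>i<n. cnj (v$i) * v$i)"
  have Hv: "(\<Sum>j<n. H $$ (i,j) * v$j) = e * v$i" if "i < n" for i
  proof -
    have "(H *\<^sub>v v) $ i = e * v $ i" using v(3) that v(1) by simp
    moreover have "(H *\<^sub>v v) $ i = (\<Sum>j<n. H $$ (i,j) * v$j)"
      using that H v(1) by (simp add: scalar_prod_def lessThan_atLeast0)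
    ultimately show ?thesis by simp
  qed
  have hc: "cnj (H $$ (i,j)) = H $$ (j,i)" if "i \<in> {..<n}" "j \<in> {..<n}" for i j
  proof -
    have "H $$ (j,i) = cnj (H $$ (i,j))" using h that H unfolding herm_def by (metis carrier_matD(1) lessThan_iff)
    then show ?thesis by simp
  qed
  have qr: "q = e * r"
  proof -
    have "q = (\<Sum>i<n. cnj (v$i) * (\<Sum>j<n. H $$ (i,j) * v$j))"
      unfolding q_def by (simp add: sum_distrib_left mult.assoc)
    also have "\<dots> = (\<Sum>i<n. e * (cnj (v$i) * v$i))" by (rule sum.cong) (auto simp: Hv)
    finally show ?thesis unfolding r_def by (simp add: sum_distrib_left)
  qed
  have "cnj q = (\<Sum>i<n. \<Sum>j<n. v$i * cnj (H $$ (i,j)) * cnj (v$j))"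
    unfolding q_def by simp
  also have "\<dots> = (\<Sum>i<n. \<Sum>j<n. v$i * H $$ (j,i) * cnj (v$j))"
    by (intro sum.cong refl) (simp add: hc)
  also have "\<dots> = q" unfolding q_def by (subst sum.swap) (simp add: mult.commute mult.left_commute)
  finally have cq: "cnj q = q" .
  have rr: "r = of_real (\<Sum>i<n. (cmod (v$i))^2)"
    unfolding r_def of_real_sum by (intro sum.cong refl) (simp add: complex_norm_square[symmetric] mult.commute)
  obtain i where i: "i < n" "v$i \<noteq> 0"
  proof -
    have "\<exists>i<n. v$i \<noteq> 0"
    proof (rule ccontr)
      assume "\<not> ?thesis"
      then have "v = 0\<^sub>v n" using v(1) by (intro eq_vecI) auto
      then show False using v(2) by simp
    qed
    then show ?thesis using that by blast
  qed
  define R where "R = (\<Sum>i<n. (cmod (v$i))^2)"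
  have "R > 0" unfolding R_def
    by (rule sum_pos2[of _ i]) (use i in auto)
  moreover have "r = of_real R" using rr R_def by simp
  ultimately have r0: "r \<noteq> 0" and rR: "cnj r = r" by auto
  have "e = q / r" using qr r0 by simp
  then have "cnj e = e" using cq rR by simp
  then show ?thesis using Reals_cnj_iff by blast
qed



definition mtrace :: "complex mat \<Rightarrow> complex" where
  "mtrace A = (\<Sum>i<dim_row A. A $$ (i,i))"

lemma mtrace_comm:
  assumes "A \<in> carrier_mat n m" "B \<in> carrier_mat m n"
  shows "mtrace (A * B) = mtrace (B * A)"
proof -
  have "mtrace (A * B) = (\<Sum>i<n. \<Sum>k<m. A $$ (i,k) * B $$ (k,i))"
    unfolding mtrace_def using assms by (simp add: scalar_prod_def lessThan_atLeast0)
  also have "\<dots> = (\<Sum>k<m. \<Sum>i<n. B $$ (k,i) * A $$ (i,k))"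
    by (subst sum.swap) (simp add: mult.commute)
  also have "\<dots> = mtrace (B * A)"
    unfolding mtrace_def using assms by (simp add: scalar_prod_def lessThan_atLeast0)
  finally show ?thesis .
qed

lemma trace_eigs:
  fixes H :: "complex mat"
  assumes H: "H \<in> carrier_mat n n" and c: "char_poly H = (\<Prod>a\<leftarrow>es. [:-a,1:])"
  shows "mtrace H = sum_list es"
proof -
  obtain B P Q where s: "schur_decomposition H es = (B,P,Q)" by (cases "schur_decomposition H es") auto
  from schur_decomposition[OF H c s] have sim: "similar_mat_wit H B P Q"
    and d: "diag_mat B = es" by auto
  have n: "n = dim_row H" using H by simp
  note w = similar_mat_witD[OF n sim]
  have "mtrace H = mtrace (P * B * Q)" using w by simp
  also have "\<dots> = mtrace (Q * (P * B))"
    by (rule mtrace_comm[of _ n n]) (use w in auto)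
  also have "Q * (P * B) = B"
  proof -
    have "Q * (P * B) = (Q * P) * B" using w by (metis assoc_mult_mat)
    then show ?thesis using w by simp
  qed
  finally have "mtrace H = mtrace B" .
  also have "\<dots> = sum_list (diag_mat B)"
    unfolding mtrace_def diag_mat_def by (simp add: sum_list_sum_nth lessThan_atLeast0)
  finally show ?thesis using d by simp
qed

lemma list4: "length xs = 4 \<Longrightarrow> \<exists>a b c d. xs = [a,b,c,d]"
  by (auto simp add: numeral_eq_Suc length_Suc_conv)

lemma det_eigs4:
  fixes H :: "complex mat"
  assumes H: "H \<in> carrier_mat 4 4" and c: "char_poly H = (\<Prod>a\<leftarrow>es. [:-a,1:])" and l: "length es = 4"
  shows "det H = prod_list es"
proof -
  have "poly (char_poly H) 0 = det (- (char_matrix H 0))" by (rule char_poly_matrix[OF H])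
  also have "char_matrix H 0 = H" unfolding char_matrix_def using H by auto
  also have "- H = (-1) \<cdot>\<^sub>m H" using H by auto
  also have "det \<dots> = det H" using H by simp
  finally have 1: "poly (char_poly H) 0 = det H" .
  obtain a b c d where "es = [a,b,c,d]" using list4[OF l] by blast
  then show ?thesis using 1 c by (simp add: mult_ac)
qed




lemma sign_comb:
  fixes a b c d :: real
  assumes nz: "a \<noteq> 0" "b \<noteq> 0" "c \<noteq> 0" "d \<noteq> 0"
  shows "a*b*c*d < 0 \<Longrightarrow> length (filter (\<lambda>x. x>0) [a,b,c,d]) \<noteq> length (filter (\<lambda>x. x<0) [a,b,c,d])"
    and "a*b*c*d > 0 \<Longrightarrow> a+b+c+d = 0 \<Longrightarrow> length (filter (\<lambda>x. x>0) [a,b,c,d]) = length (filter (\<lambda>x. x<0) [a,b,c,d])"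
  using nz by (cases "a>0"; cases "b>0"; cases "c>0"; cases "d>0"; auto simp: mult_less_0_iff zero_less_mult_iff)+

lemma sig4:
  fixes H :: "complex mat"
  assumes H: "H \<in> carrier_mat 4 4" and h: "herm H" and dH: "det H = of_real D"
  shows "D < 0 \<Longrightarrow> signature H \<noteq> 0"
    and "D > 0 \<Longrightarrow> mtrace H = 0 \<Longrightarrow> signature H = 0"
proof -
  obtain es where c: "char_poly H = (\<Prod>a\<leftarrow>es. [:-a,1:])" and l: "length es = 4"
    using char_poly_factorized[OF H] by blast
  have real: "e \<in> \<real>" if "e \<in> set es" for e
  proof (rule herm_eig_real[OF H h])
    show "poly (char_poly H) e = 0" unfolding c poly_prod_list
      using that by (induction es) auto
  qed
  define rs where "rs = map Re es"
  have es: "es = map of_real rs" unfolding rs_def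
    by (rule nth_equalityI) (simp_all, metis of_real_Re real nth_mem)
  obtain a b c d where rs4: "rs = [a,b,c,d]" using list4[of rs] l rs_def by auto
  have sig: "signature H = int (length (filter (\<lambda>x. x>0) rs)) - int (length (filter (\<lambda>x. x<0) rs))"
    unfolding signature_list[OF c] es by (simp add: filter_map o_def)
  have "det H = prod_list es" by (rule det_eigs4[OF H c l])
  then have "complex_of_real D = of_real (a*b*c*d)" using dH unfolding es rs4 by (simp add: mult_ac)
  then have Dp: "D = a*b*c*d" using of_real_eq_iff by blast
  have tr: "mtrace H = of_real (a+b+c+d)" using trace_eigs[OF H c] unfolding es rs4 by simp
  show "D < 0 \<Longrightarrow> signature H \<noteq> 0"
  proof -
    assume "D < 0"
    then have nz: "a \<noteq> 0" "b \<noteq> 0" "c \<noteq> 0" "d \<noteq> 0" using Dp by auto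
    show ?thesis using sign_comb(1)[OF nz] \<open>D < 0\<close> Dp sig rs4 by simp
  qed
  show "D > 0 \<Longrightarrow> mtrace H = 0 \<Longrightarrow> signature H = 0"
  proof -
    assume "D > 0" "mtrace H = 0"
    then have nz: "a \<noteq> 0" "b \<noteq> 0" "c \<noteq> 0" "d \<noteq> 0" using Dp by auto
    have "a+b+c+d = 0" using \<open>mtrace H = 0\<close> tr by (metis of_real_eq_0_iff)
    then show ?thesis using sign_comb(2)[OF nz] \<open>D > 0\<close> Dp sig rs4 by simp
  qed
qed




definition m2 :: "'a::comm_ring_1 \<Rightarrow> 'a \<Rightarrow> 'a \<Rightarrow> 'a \<Rightarrow> 'a mat" where
  "m2 a b c d = mat 2 2 (\<lambda>(i,j). if i = 0 then (if j = 0 then a else b) else (if j = 0 then c else d))"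

lemma less2: "(i::nat) < 2 \<Longrightarrow> i = 0 \<or> i = 1" by auto
lemma less4: "(i::nat) < 4 \<Longrightarrow> i = 0 \<or> i = 1 \<or> i = 2 \<or> i = 3" by auto

lemma m2_carrier[simp]: "m2 a b c d \<in> carrier_mat 2 2" and m2_dims[simp]: "dim_row (m2 a b c d) = 2" "dim_col (m2 a b c d) = 2"
  by (auto simp: m2_def)

lemma m2_index[simp]: "m2 a b c d $$ (0,0) = a" "m2 a b c d $$ (0,1) = b" "m2 a b c d $$ (1,0) = c" "m2 a b c d $$ (1,1) = d"
  by (auto simp: m2_def)

lemma m2_index'[simp]: "m2 a b c d $$ (0,Suc 0) = b" "m2 a b c d $$ (Suc 0,0) = c" "m2 a b c d $$ (Suc 0,Suc 0) = d"
  by (auto simp: m2_def)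

lemma sum2: "(\<Sum>i<2. g i) = g 0 + g (1::nat)"
  by (simp add: numeral_2_eq_2)

lemma m2_mult: "m2 a b c d * m2 a' b' c' d' = m2 (a*a'+b*c') (a*b'+b*d') (c*a'+d*c') (c*b'+d*d')"
  by (rule eq_matI) (auto simp: m2_def scalar_prod_def sum2[unfolded lessThan_atLeast0] dest!: less2)

lemma m2_minus: "m2 a b c d - m2 a' b' c' d' = m2 (a-a') (b-b') (c-c') (d-d')"
  by (rule eq_matI) (auto simp: m2_def dest!: less2)

lemma det_m2: "det (m2 a b c d) = a*d - b*c"
proof -
  have 1: "det M = M $$ (0,0)" if M: "M \<in> carrier_mat 1 1" for M :: "'a mat"
  proof -
    have "det M = (\<Sum>j<1. M $$ (0,j) * cofactor M 0 j)" by (rule laplace_expansion_row[OF M]) auto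
    also have "\<dots> = M $$ (0,0) * cofactor M 0 0" by simp
    finally have d1: "det M = M $$ (0,0) * cofactor M 0 0" .
    have "mat_delete M 0 0 \<in> carrier_mat 0 0" using M by (auto simp: mat_delete_def)
    then have "cofactor M 0 0 = 1" unfolding cofactor_def by (simp add: det_dim_zero)
    with d1 show ?thesis by simp
  qed
  have "det (m2 a b c d) = (\<Sum>j<2. m2 a b c d $$ (0,j) * cofactor (m2 a b c d) 0 j)"
    by (rule laplace_expansion_row) auto
  also have "\<dots> = a * cofactor (m2 a b c d) 0 0 + b * cofactor (m2 a b c d) 0 1" by (simp add: sum2)
  also have "cofactor (m2 a b c d) 0 0 = d" unfolding cofactor_def
    by (subst 1) (auto simp: mat_delete_def m2_def)
  also have "cofactor (m2 a b c d) 0 1 = - c" unfolding cofactor_def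
    by (subst 1) (auto simp: mat_delete_def m2_def)
  finally show ?thesis by (simp add: algebra_simps)
qed


definition Vx :: "int \<Rightarrow> int \<Rightarrow> int mat" where
  "Vx x f = four_block_mat (m2 (-1) 1 0 (-x)) (m2 1 0 0 1) (m2 0 0 0 0) (m2 0 f f (1+x))"

lemma Vx_carrier: "Vx x f \<in> carrier_mat 4 4"
  unfolding Vx_def by (simp add: four_block_mat_def)

lemma Vx_seifert: "seifert_matrix (Vx x f)"
proof -
  have e: "Vx x f - transpose_mat (Vx x f) =
     four_block_mat (m2 0 1 (-1) 0) (m2 1 0 0 1) (m2 (-1) 0 0 (-1)) (m2 0 0 0 0)"
    by (rule eq_matI) (auto simp: Vx_def four_block_mat_def m2_def dest!: less4)
  have "det (Vx x f - transpose_mat (Vx x f)) = 1"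
    unfolding e by (subst det_four_block_mat[of _ 2]) (auto simp: m2_mult m2_minus det_m2)
  then show ?thesis unfolding seifert_matrix_def using Vx_carrier[of x f] by auto
qed

lemma herm_Vx:
  fixes w :: complex
  defines "z \<equiv> 1 - w" and "cz \<equiv> 1 - cnj w"
  shows "herm_seifert w (Vx x f) = four_block_mat (m2 (-(z+cz)) z cz (-(of_int x)*(z+cz))) (m2 z 0 0 z)
      (m2 cz 0 0 cz) (m2 0 (of_int f * (z+cz)) (of_int f * (z+cz)) ((1 + of_int x)*(z+cz)))"
  unfolding z_def cz_def
  by (rule eq_matI) (auto simp: herm_seifert_def Vx_def four_block_mat_def m2_def algebra_simps dest!: less4)

lemma det_Vx:
  assumes w: "cmod w = 1"
  shows "det (herm_seifert w (Vx x f)) = of_real ((2 - 2 * Re w)^2 *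
     (1 + (of_int (f^2 - f + x^2 + x)) * (2 - 2 * Re w) - of_int (x * f^2) * (2 - 2 * Re w)^2))"
proof -
  define z where "z = 1 - w"
  define cz where "cz = 1 - cnj w"
  define s where "s = z + cz"
  have s: "s = of_real (2 - 2 * Re w)" unfolding s_def z_def cz_def
    by (simp add: complex_eq_iff)
  have zz: "z * cz = s"
  proof -
    have "w * cnj w = 1" using w complex_norm_square[of w] by simp
    then show ?thesis unfolding z_def cz_def s_def by (simp add: algebra_simps)
  qed
  have "det (herm_seifert w (Vx x f)) = det (four_block_mat (m2 (-s) z cz (-(of_int x)*s)) (m2 z 0 0 z)
      (m2 cz 0 0 cz) (m2 0 (of_int f * s) (of_int f * s) ((1 + of_int x)*s)))"
    unfolding herm_Vx s_def z_def cz_def by simp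
  also have "\<dots> = det (m2 (-s) z cz (-(of_int x)*s) * m2 0 (of_int f * s) (of_int f * s) ((1 + of_int x)*s)
       - m2 z 0 0 z * m2 cz 0 0 cz)"
    by (rule det_four_block_mat[of _ 2]) (auto simp: m2_mult algebra_simps)
  also have "\<dots> = s^2 * (1 + (of_int (f^2 - f + x^2 + x)) * s - of_int (x * f^2) * s^2)
      + (z*cz - s) * (of_int (f^2 - f + x^2 + x) * s^2 + z*cz + s) - z*cz*of_int f*s*(z + cz - s)"
    unfolding m2_mult m2_minus det_m2 of_int_add of_int_diff of_int_mult of_int_power
    by (simp add: algebra_simps power2_eq_square)
  also have "\<dots> = s^2 * (1 + (of_int (f^2 - f + x^2 + x)) * s - of_int (x * f^2) * s^2)"
    using zz s_def by simp
  finally show ?thesis unfolding s by simp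
qed




lemma herm_hs: "dim_row V = dim_col V \<Longrightarrow> herm (herm_seifert w V)"
  unfolding herm_def herm_seifert_def by auto

lemma hs_carrier: "herm_seifert w (Vx x f) \<in> carrier_mat 4 4"
  using Vx_carrier[of x f] unfolding herm_seifert_def by auto

lemma sum4: "(\<Sum>i<4. g i) = g 0 + g 1 + g 2 + g (3::nat)"
  by (simp add: numeral_eq_Suc)

lemma trace_Vx: "mtrace (herm_seifert w (Vx x f)) = 0"
  unfolding herm_Vx mtrace_def by (simp add: four_block_mat_def sum4 m2_def algebra_simps)

lemma S_Re: assumes "w \<in> S_set" shows "Re w < 1" "cmod w = 1"
proof -
  from assms have n: "cmod w = 1" and i: "Im w > 0" unfolding S_set_def by auto
  have e: "(Re w)^2 + (Im w)^2 = 1" using n by (metis cmod_power2 one_power2)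
  have "Re w \<le> 1" using abs_Re_le_cmod[of w] n by simp
  moreover have "Re w \<noteq> 1"
  proof
    assume "Re w = 1"
    then have "(Im w)^2 = 0" using e by simp
    then show False using i by simp
  qed
  ultimately show "Re w < 1" by simp
  show "cmod w = 1" by fact
qed

lemma S_inj: assumes "a \<in> S_set" "b \<in> S_set" "Re a = Re b" shows "a = b"
proof -
  from assms have n: "cmod a = 1" "cmod b = 1" and i: "Im a > 0" "Im b > 0" unfolding S_set_def by auto
  have "(Re a)^2 + (Im a)^2 = 1" "(Re b)^2 + (Im b)^2 = 1" using n by (metis cmod_power2 one_power2)+
  then have "(Im a)^2 = (Im b)^2" using assms(3) by simp
  then have "Im a = Im b" using i by (simp add: power2_eq_iff)
  then show ?thesis using assms(3) by (simp add: complex_eq_iff)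
qed

lemma sigma_Vx:
  fixes x f :: int
  assumes w: "w \<in> S_set"
  defines "sr \<equiv> 2 - 2 * Re w"
  defines "h \<equiv> 1 + (of_int (f^2 - f + x^2 + x)) * sr - of_int (x * f^2) * sr^2"
  shows "h < 0 \<Longrightarrow> sigma_w w (Vx x f) \<noteq> 0" and "h > 0 \<Longrightarrow> sigma_w w (Vx x f) = 0"
proof -
  have sr: "sr > 0" using S_Re[OF w] unfolding sr_def by simp
  have d: "det (herm_seifert w (Vx x f)) = of_real (sr^2 * h)"
    using det_Vx[OF S_Re(2)[OF w], of x f] unfolding sr_def h_def by simp
  have herm: "herm (herm_seifert w (Vx x f))"
    by (rule herm_hs) (use Vx_carrier[of x f] in auto)
  show "h < 0 \<Longrightarrow> sigma_w w (Vx x f) \<noteq> 0"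
    unfolding sigma_w_def
    by (rule sig4(1)[OF hs_carrier herm d]) (use sr in \<open>simp add: mult_pos_neg\<close>)
  show "h > 0 \<Longrightarrow> sigma_w w (Vx x f) = 0"
    unfolding sigma_w_def
    by (rule sig4(2)[OF hs_carrier herm d]) (use sr trace_Vx in auto)
qed




lemma concave_pos:
  fixes m n s sb :: real
  assumes "1 + m * sb - n * sb^2 > 0" "n \<ge> 0" "0 < s" "s \<le> sb"
  shows "1 + m * s - n * s^2 > 0"
proof (cases "m - n * s \<ge> 0")
  case True
  then have "s * (m - n * s) \<ge> 0" using assms by simp
  then show ?thesis by (simp add: power2_eq_square algebra_simps)
next
  case False
  have "m - n * sb \<le> m - n * s" using assms by (simp add: mult_left_mono)
  then have "m - n * sb < 0" using False by simp
  have "sb * (m - n * s) \<le> s * (m - n * s)" using False assms by (simp add: mult_right_mono_neg)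
  moreover have "sb * (m - n * sb) \<le> sb * (m - n * s)" using \<open>m - n * sb \<le> m - n * s\<close> assms
    by (simp add: mult_left_mono)
  ultimately have "1 + sb * (m - n * sb) \<le> 1 + s * (m - n * s)" by simp
  then show ?thesis using assms(1) by (simp add: power2_eq_square algebra_simps)
qed

lemma exist_xf:
  fixes sa sb :: real
  assumes "0 < sb" "sb < sa"
  shows "\<exists>x f :: int. x \<ge> 0 \<and> f \<ge> 1 \<and>
     1 + of_int (f^2 - f + x^2 + x) * sa - of_int (x * f^2) * sa^2 < 0 \<and>
     1 + of_int (f^2 - f + x^2 + x) * sb - of_int (x * f^2) * sb^2 > 0"
proof -
  define d where "d = (sa - sb) / 2"
  define sc where "sc = sb + d"
  have d: "d > 0" using assms unfolding d_def by simp
  have sa: "sa > 0" using assms by simp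
  define K where "K = max ((3 + 1/sb) / d) (1 / (sb * sa)) + 1"
  define f :: int where "f = ceiling K"
  have K1: "K \<ge> 1" unfolding K_def using d sa assms by (simp add: max_def)
  have fK: "real_of_int f \<ge> K" unfolding f_def by simp
  have f1: "f \<ge> 1" using fK K1 by linarith
  define F where "F = real_of_int f ^ 2"
  have FK: "F \<ge> K" unfolding F_def using fK f1
    by (smt (verit) of_int_1_le_iff power2_eq_square mult_le_cancel_left1)
  have Ff: "F \<ge> real_of_int f" unfolding F_def using f1
    by (smt (verit) of_int_1_le_iff power2_eq_square mult_le_cancel_left1)
  have FKd: "F * d \<ge> 3 + 1/sb"
  proof -
    have "K \<ge> (3 + 1/sb) / d" unfolding K_def by simp
    then have "F \<ge> (3 + 1/sb) / d" using FK by simp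
    then show ?thesis using d by (simp add: pos_divide_le_eq)
  qed
  have FKs: "F * (sb * sa) \<ge> 1"
  proof -
    have "K \<ge> 1 / (sb * sa)" unfolding K_def by simp
    then have "F \<ge> 1 / (sb * sa)" using FK by simp
    then show ?thesis using assms sa by (simp add: pos_divide_le_eq)
  qed
  define x :: int where "x = ceiling (F * sb)"
  have x1: "real_of_int x \<ge> F * sb" unfolding x_def by simp
  have x2: "real_of_int x \<le> F * sc"
  proof -
    have "real_of_int x < F * sb + 1" unfolding x_def by linarith
    moreover have "F * d \<ge> 1" using FKd assms by (smt (verit) divide_pos_pos)
    ultimately show ?thesis unfolding sc_def by (simp add: algebra_simps)
  qed
  have F0: "F > 0" using FK K1 by simp
  have x0: "real_of_int x > 0" using x1 F0 assms by (smt (verit) mult_pos_pos)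
  define X where "X = real_of_int x"
  have XF: "X \<ge> F * sb" "X \<le> F * sc" "X > 0" using x1 x2 x0 unfolding X_def by auto
  have m: "of_int (f^2 - f + x^2 + x) = F - real_of_int f + X^2 + X" unfolding F_def X_def by simp
  have n: "of_int (x * f^2) = X * F" unfolding F_def X_def by simp
  have pb: "1 + (F - real_of_int f + X^2 + X) * sb - X * F * sb^2 > 0"
  proof -
    have "X * F * sb^2 = X * sb * (F * sb)" by (simp add: power2_eq_square)
    also have "\<dots> \<le> X * sb * X" using XF assms by (simp add: mult_left_mono)
    finally have "X * F * sb^2 \<le> X^2 * sb" by (simp add: power2_eq_square mult_ac)
    moreover have "(F - real_of_int f + X) * sb \<ge> 0" using Ff XF assms by simp
    ultimately show ?thesis by (simp add: algebra_simps)
  qed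
  have pa: "1 + (F - real_of_int f + X^2 + X) * sa - X * F * sa^2 < 0"
  proof -
    have xs1: "X * sa \<ge> 1"
    proof -
      have "X * sa \<ge> F * sb * sa" using XF sa by (simp add: mult_right_mono)
      then show ?thesis using FKs by (simp add: mult_ac)
    qed
    have Fsa: "F * sa \<le> X * sa / sb"
    proof -
      have "F * sb * sa \<le> X * sa" using XF sa by (simp add: mult_right_mono)
      then show ?thesis using assms by (simp add: pos_le_divide_eq mult_ac)
    qed
    have X2: "X^2 * sa \<le> X * F * sc * sa"
    proof -
      have "X * X \<le> X * (F * sc)" using XF by (simp add: mult_left_mono)
      then have "X * X * sa \<le> X * (F * sc) * sa" using sa by (simp add: mult_right_mono)
      then show ?thesis by (simp add: power2_eq_square mult_ac)
    qed
    have "1 + (F - real_of_int f + X^2 + X) * sa \<le> 1 + F * sa + X * sa + X * F * sc * sa"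
    proof -
      have e: "1 + (F - real_of_int f + X^2 + X) * sa = 1 + F*sa + X*sa + X^2*sa - real_of_int f * sa"
        by (simp add: algebra_simps)
      have "real_of_int f * sa \<ge> 0" using f1 sa by simp
      then show ?thesis using e X2 by linarith
    qed
    also have "\<dots> \<le> X * sa + X * sa / sb + X * sa + X * F * sc * sa" using xs1 Fsa by simp
    also have "\<dots> = X * sa * (2 + 1/sb) + X * F * sc * sa" by (simp add: algebra_simps)
    also have "\<dots> < X * sa * (F * d) + X * F * sc * sa"
    proof -
      have p1: "X * sa > 0" using XF sa by simp
      have p2: "2 + 1/sb < F * d" using FKd by simp
      have "X * sa * (2 + 1/sb) < X * sa * (F * d)" by (rule mult_strict_left_mono[OF p2 p1])
      then show ?thesis by simp
    qed
    also have "\<dots> = X * F * sa^2" unfolding sc_def d_def by (simp add: algebra_simps power2_eq_square)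
    finally show ?thesis by simp
  qed
  show ?thesis
    apply (rule exI[of _ x], rule exI[of _ f])
    using pa pb f1 x0 unfolding m n X_def by auto
qed




theorem theorem1:
  fixes N :: nat and w :: "nat \<Rightarrow> complex" and c :: "nat \<Rightarrow> real"
  assumes "\<forall>i\<in>{1..N}. w i \<in> S_set"
    and "inj_on w {1..N}"
    and "\<forall>V. seifert_matrix V \<longrightarrow> (\<Sum>i=1..N. c i * real_of_int (sigma_w (w i) V)) = 0"
  shows "\<forall>i\<in>{1..N}. c i = 0"
proof (rule ccontr)
  assume na: "\<not> (\<forall>i\<in>{1..N}. c i = 0)"
  define I where "I = {i\<in>{1..N}. c i \<noteq> 0}"
  have finI: "finite I" unfolding I_def by simp
  have neI: "I \<noteq> {}" using na unfolding I_def by auto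
  have IS: "w i \<in> S_set" if "i \<in> I" for i using assms(1) that unfolding I_def by auto
  obtain i0 where i0: "i0 \<in> I" "\<forall>j\<in>I. Re (w i0) \<le> Re (w j)"
  proof -
    have "Min (Re ` w ` I) \<in> Re ` w ` I" using finI neI by (intro Min_in) auto
    then obtain i0 where "i0 \<in> I" "Re (w i0) = Min (Re ` w ` I)" by auto
    moreover have "\<forall>j\<in>I. Min (Re ` w ` I) \<le> Re (w j)" using finI by auto
    ultimately show ?thesis using that by auto
  qed
  define J where "J = I - {i0}"
  have strict: "Re (w i0) < Re (w j)" if "j \<in> J" for j
  proof -
    have j: "j \<in> I" "j \<noteq> i0" using that unfolding J_def by auto
    have "Re (w i0) \<noteq> Re (w j)"
    proof
      assume "Re (w i0) = Re (w j)"
      then have "w i0 = w j" by (rule S_inj[OF IS[OF i0(1)] IS[OF j(1)]])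
      moreover have "i0 \<in> {1..N}" "j \<in> {1..N}" using i0(1) j(1) unfolding I_def by auto
      ultimately have "i0 = j" by (intro inj_onD[OF assms(2)])
      then show False using j(2) by simp
    qed
    moreover have "Re (w i0) \<le> Re (w j)" using i0(2) j(1) by blast
    ultimately show ?thesis by simp
  qed
  define sa where "sa = 2 - 2 * Re (w i0)"
  define sj where "sj = (\<lambda>j. 2 - 2 * Re (w j))"
  define sb where "sb = (if J = {} then sa / 2 else Max (sj ` J))"
  have sa0: "sa > 0" using S_Re(1)[OF IS[OF i0(1)]] unfolding sa_def by simp
  have sj0: "sj j > 0" if "j \<in> I" for j using S_Re(1)[OF IS[OF that]] unfolding sj_def by simp
  have finJ: "finite J" using finI unfolding J_def by simp
  have sbJ: "sj j \<le> sb" if "j \<in> J" for j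
  proof -
    have "J \<noteq> {}" using that by auto
    then have "sb = Max (sj ` J)" unfolding sb_def by simp
    moreover have "sj j \<le> Max (sj ` J)" using that finJ by (intro Max_ge) auto
    ultimately show ?thesis by simp
  qed
  have sb0: "0 < sb \<and> sb < sa"
  proof (cases "J = {}")
    case True
    then show ?thesis using sa0 unfolding sb_def by simp
  next
    case False
    then have "Max (sj ` J) \<in> sj ` J" using finJ by (intro Max_in) auto
    then obtain j where j: "j \<in> J" "sb = sj j" using False unfolding sb_def by auto
    have "j \<in> I" using j(1) unfolding J_def by simp
    then show ?thesis using j sj0 strict[OF j(1)] unfolding sa_def sj_def by simp
  qed
  obtain x f :: int where xf: "x \<ge> 0" "f \<ge> 1"
     "1 + of_int (f^2 - f + x^2 + x) * sa - of_int (x * f^2) * sa^2 < 0"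
     "1 + of_int (f^2 - f + x^2 + x) * sb - of_int (x * f^2) * sb^2 > 0"
    using exist_xf[of sb sa] sb0 by blast
  have s0: "sigma_w (w i0) (Vx x f) \<noteq> 0"
    by (rule sigma_Vx(1)[OF IS[OF i0(1)]]) (use xf(3) in \<open>simp add: sa_def\<close>)
  have sJ: "sigma_w (w j) (Vx x f) = 0" if "j \<in> J" for j
  proof (rule sigma_Vx(2))
    have jI: "j \<in> I" using that unfolding J_def by simp
    show "w j \<in> S_set" by (rule IS[OF jI])
    have "1 + of_int (f^2 - f + x^2 + x) * sj j - of_int (x * f^2) * (sj j)^2 > 0"
      by (rule concave_pos[OF xf(4)]) (use xf(1) sj0[OF jI] sbJ[OF that] in auto)
    then show "0 < 1 + of_int (f^2 - f + x^2 + x) * (2 - 2 * Re (w j)) - of_int (x * f^2) * (2 - 2 * Re (w j))^2"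
      unfolding sj_def by simp
  qed
  have "(\<Sum>i=1..N. c i * real_of_int (sigma_w (w i) (Vx x f))) = 0"
    using assms(3) Vx_seifert by blast
  moreover have "(\<Sum>i=1..N. c i * real_of_int (sigma_w (w i) (Vx x f)))
      = c i0 * real_of_int (sigma_w (w i0) (Vx x f))"
  proof -
    have i0N: "i0 \<in> {1..N}" using i0(1) unfolding I_def by simp
    have "(\<Sum>i=1..N. c i * real_of_int (sigma_w (w i) (Vx x f)))
      = c i0 * real_of_int (sigma_w (w i0) (Vx x f)) + (\<Sum>i\<in>{1..N}-{i0}. c i * real_of_int (sigma_w (w i) (Vx x f)))"
      by (rule sum.remove[OF _ i0N]) simp
    also have "(\<Sum>i\<in>{1..N}-{i0}. c i * real_of_int (sigma_w (w i) (Vx x f))) = 0"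
    proof (rule sum.neutral, rule ballI)
      fix i assume i: "i \<in> {1..N} - {i0}"
      show "c i * real_of_int (sigma_w (w i) (Vx x f)) = 0"
      proof (cases "c i = 0")
        case False
        then have "i \<in> J" using i unfolding J_def I_def by auto
        then show ?thesis using sJ by simp
      qed simp
    qed
    finally show ?thesis by simp
  qed
  ultimately show False using s0 i0(1) unfolding I_def by simp
qed


end
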